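(* Let $\sigma$ be a positive finite Borel measure on $\partial\mathbb D$ and $u$ its Poisson integral, $u(z)=\int_{\partial\mathbb D}\frac{1-|z|^2}{|\xi-z|^2}d\sigma(\xi)$. Suppose there is $\varepsilon\in(0,1)$ such that $\sigma(2I)\le2(1+\varepsilon)\sigma(I)$ for every arc $I\subset\partial\mathbb D$. Then there is $c=c(\varepsilon)>0$ such that $\frac{\sigma(I)}{|I|}\ge c\,u(z_I)$ for every arc $I\subset\partial\mathbb D$.
   Context: $m$ is normalized Lebesgue measure on $\partial\mathbb D$, $|I|=m(I)$; $2I$ is the arc with the same center as $I$ and length $2|I|$ (the whole circle if $2|I|\ge1$); $z_I=(1-|I|)\xi_I$ with $\xi_I$ the center of $I$. *)

theory Defs
  imports "HOL-Analysis.Analysis"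
begin

text \<open>Closed arc of the unit circle with centre xi (|xi| = 1) and normalized length l, 0 < l \<le> 1.
  Its normalized Lebesgue measure is l; for l \<ge> 1/2 the doubled arc (length 2l) is the whole circle.\<close>
definition circ_arc :: "complex \<Rightarrow> real \<Rightarrow> complex set" where
  "circ_arc xi l = {xi * cis (2 * pi * t) | t. \<bar>t\<bar> \<le> l / 2}"

definition poisson_int :: "complex measure \<Rightarrow> complex \<Rightarrow> real" where
  "poisson_int \<sigma> z = (\<integral>xi. (1 - (cmod z)^2) / (cmod (xi - z))^2 \<partial>\<sigma>)"

end

theory Submission
  imports Defs
begin

lemma cos_ge_aux: fixes x :: real assumes "0 \<le> x" shows "1 - x^2/2 \<le> cos x"
proof -
  let ?f = "\<lambda>x. cos x - 1 + x^2/2"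
  have "\<And>u. \<lbrakk>0 \<le> u; u \<le> x\<rbrakk> \<Longrightarrow> (?f has_real_derivative (u - sin u)) (at u)"
    by (auto intro!: derivative_eq_intros simp: field_simps)
  moreover have "\<And>u. \<lbrakk>0 \<le> u; u \<le> x\<rbrakk> \<Longrightarrow> 0 \<le> u - sin u" using sin_x_le_x by auto
  ultimately have "?f x \<ge> ?f 0"
    by (intro DERIV_nonneg_imp_nondecreasing[OF assms]) blast
  then show ?thesis by simp
qed

lemma sin_ge_aux: fixes x :: real assumes "0 \<le> x" shows "x - x^3/6 \<le> sin x"
proof -
  let ?f = "\<lambda>x. sin x - x + x^3/6"
  have "\<And>u. \<lbrakk>0 \<le> u; u \<le> x\<rbrakk> \<Longrightarrow> (?f has_real_derivative (cos u - 1 + u^2/2)) (at u)"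
    by (auto intro!: derivative_eq_intros simp: field_simps)
  moreover have "\<And>u. \<lbrakk>0 \<le> u; u \<le> x\<rbrakk> \<Longrightarrow> 0 \<le> cos u - 1 + u^2/2" using cos_ge_aux by force
  ultimately have "?f x \<ge> ?f 0"
    by (intro DERIV_nonneg_imp_nondecreasing[OF assms]) blast
  then show ?thesis by simp
qed

lemma one_minus_cos_lb: fixes a :: real assumes "\<bar>a\<bar> \<le> pi" shows "a^2/9 \<le> 2 - 2 * cos a"
proof -
  define x where "x = \<bar>a\<bar>/2"
  have x0: "0 \<le> x" and xpi: "x \<le> pi/2" using assms by (auto simp: x_def)
  have "x^2 \<le> (pi/2)^2" using x0 xpi by (intro power_mono) auto
  also have "\<dots> \<le> 4"
  proof -
    have "pi * pi \<le> 4 * 4" using pi_less_4 pi_gt_zero by (intro mult_mono) auto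
    then show ?thesis by (simp add: power2_eq_square)
  qed
  finally have x2: "x^2 \<le> 4" .
  have "x - x^3/6 = x * (1 - x^2/6)" by (simp add: power2_eq_square power3_eq_cube algebra_simps)
  also have "\<dots> \<ge> x * (1/3)" using x0 x2 by (intro mult_left_mono) auto
  finally have s: "x * (1/3) \<le> sin x" using sin_ge_aux[OF x0] by linarith
  have "(x*(1/3))^2 \<le> (sin x)^2" using s x0 by (intro power_mono) auto
  moreover have "(sin x)^2 = (sin (a/2))^2"
    by (cases "a \<ge> 0") (auto simp: x_def)
  moreover have "cos a = 1 - 2 * (sin (a/2))^2"
    using cos_double[of "a/2"] sin_cos_squared_add[of "a/2"] by simp
  moreover have "a^2 = 4 * x^2" by (simp add: x_def power2_eq_square)
  ultimately show ?thesis by (simp add: power2_eq_square)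
qed

lemma arc_sub: "cmod xi = 1 \<Longrightarrow> circ_arc xi L \<subseteq> sphere 0 1"
  by (auto simp: circ_arc_def norm_mult)

lemma arc_image: "circ_arc xi L = (\<lambda>t. xi * cis (2*pi*t)) ` {-L/2..L/2}"
proof
  show "circ_arc xi L \<subseteq> (\<lambda>t. xi * cis (2*pi*t)) ` {-L/2..L/2}"
    unfolding circ_arc_def by (auto simp: abs_le_iff intro!: imageI)
  show "(\<lambda>t. xi * cis (2*pi*t)) ` {-L/2..L/2} \<subseteq> circ_arc xi L"
  proof
    fix z assume "z \<in> (\<lambda>t. xi * cis (2*pi*t)) ` {-L/2..L/2}"
    then obtain t where "t \<in> {-L/2..L/2}" "z = xi * cis (2*pi*t)" by auto
    then show "z \<in> circ_arc xi L" unfolding circ_arc_def by (auto simp: abs_le_iff)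
  qed
qed

lemma arc_closed: "closed (circ_arc xi L)"
  unfolding arc_image
  by (intro compact_imp_closed compact_continuous_image continuous_intros) auto

lemma polar_rep:
  assumes "cmod xi = 1" "cmod z = 1"
  shows "\<exists>t. \<bar>t\<bar> \<le> 1/2 \<and> z = xi * cis (2*pi*t)"
proof -
  define w where "w = z / xi"
  have xi0: "xi \<noteq> 0" using assms by auto
  have nw: "cmod w = 1" using assms by (simp add: w_def norm_divide)
  then have w0: "w \<noteq> 0" by auto
  have "cis (Arg w) = w" using cis_Arg[OF w0] nw by (simp add: sgn_div_norm)
  moreover have "\<bar>Arg w / (2*pi)\<bar> \<le> 1/2" using Arg_bounded[of w] pi_gt_zero
    by (auto simp: abs_le_iff divide_simps)
  moreover have "z = xi * w" using xi0 by (simp add: w_def)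
  ultimately show ?thesis by (intro exI[of _ "Arg w / (2*pi)"]) auto
qed

lemma arc_full:
  assumes "cmod xi = 1" "1 \<le> L"
  shows "circ_arc xi L = sphere 0 1"
proof
  show "circ_arc xi L \<subseteq> sphere 0 1" using arc_sub[OF assms(1)] .
  show "sphere 0 1 \<subseteq> circ_arc xi L"
  proof
    fix z :: complex assume "z \<in> sphere 0 1"
    then obtain t where "\<bar>t\<bar> \<le> 1/2" "z = xi * cis (2*pi*t)" using polar_rep[OF assms(1)] by auto
    then show "z \<in> circ_arc xi L" using assms(2) unfolding circ_arc_def by force
  qed
qed

lemma dist_formula:
  assumes "cmod xi = 1"
  shows "(cmod (xi * cis a - complex_of_real r * xi))^2 = (1-r)^2 + r * (2 - 2 * cos a)"
proof -
  have "xi * cis a - complex_of_real r * xi = xi * (cis a - complex_of_real r)" by (simp add: algebra_simps)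
  then have "cmod (xi * cis a - complex_of_real r * xi) = cmod (cis a - complex_of_real r)"
    using assms by (simp add: norm_mult)
  moreover have "(cmod (cis a - complex_of_real r))^2 = (cos a - r)^2 + (sin a)^2"
    by (simp add: cmod_power2)
  moreover have "(cos a - r)^2 + (sin a)^2 = (1-r)^2 + r * (2 - 2 * cos a)"
    using sin_cos_squared_add[of a] by (simp add: power2_eq_square algebra_simps)
  ultimately show ?thesis by simp
qed

lemma pointwise:
  assumes xi: "cmod xi = 1" and zt: "cmod zeta = 1" and l0: "0 < l" and l1: "l \<le> 1"
    and N: "1 \<le> 2^N * l"
  shows "(1 - (cmod (complex_of_real (1-l) * xi))^2) / (cmod (zeta - complex_of_real (1-l) * xi))^2
     \<le> (32/l) * (\<Sum>k\<le>N. (1/4)^k * indicator (circ_arc xi (2^k*l)) zeta)"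
proof -
  obtain t where t: "\<bar>t\<bar> \<le> 1/2" and zeta: "zeta = xi * cis (2*pi*t)"
    using polar_rep[OF xi zt] by auto
  define a where "a = 2*pi*t"
  have api: "\<bar>a\<bar> \<le> pi" using t pi_gt_zero by (simp add: a_def abs_mult)
  define D where "D = (cmod (zeta - complex_of_real (1-l) * xi))^2"
  have D: "D = l^2 + (1-l) * (2 - 2 * cos a)"
    using dist_formula[OF xi, of a "1-l"] by (simp add: D_def zeta a_def)
  have "a^2/9 \<le> 2 - 2 * cos a" using one_minus_cos_lb[OF api] .
  moreover have "4 * t^2 \<le> a^2/9"
  proof -
    have "3 * 3 \<le> pi * pi" using pi_gt3 by (intro mult_mono) auto
    then have "9 \<le> pi * pi" by simp
    then have "9 * t^2 \<le> (pi*pi) * t^2" by (intro mult_right_mono) auto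
    then show ?thesis by (simp add: a_def power2_eq_square algebra_simps)
  qed
  ultimately have c: "4 * t^2 \<le> 2 - 2 * cos a" by linarith
  have Dlb: "l^2 + 4 * (1-l) * t^2 \<le> D"
  proof -
    have "(1-l) * (4 * t^2) \<le> (1-l) * (2 - 2 * cos a)" using c l1 by (intro mult_left_mono) auto
    then show ?thesis unfolding D by (simp add: algebra_simps)
  qed
  have "0 \<le> 4 * (1-l) * t^2" using l1 by simp
  moreover have "0 < l^2" using l0 by simp
  ultimately have Dpos: "0 < D" using Dlb by linarith
  define num where "num = 1 - (cmod (complex_of_real (1-l) * xi))^2"
  have n1: "cmod (complex_of_real (1-l)) = 1 - l" using l1 by (metis abs_of_nonneg diff_ge_0_iff_ge norm_of_real)
  have num: "num = 1 - (1-l)^2" using xi n1 unfolding num_def norm_mult by simp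
  have "(1-l)^2 \<le> 1" using l0 l1 by (simp add: power_le_one)
  then have num2: "num \<le> 2 * l" "0 \<le> num" using l0 l1 unfolding num by (auto simp: power2_eq_square algebra_simps)
  define P where "P = (\<lambda>k::nat. \<bar>t\<bar> \<le> 2^k*l/2)"
  have PN: "P N" using t N unfolding P_def by simp
  define k0 where "k0 = (LEAST k. P k)"
  have Pk0: "P k0" unfolding k0_def by (rule LeastI[of P, OF PN])
  have k0N: "k0 \<le> N" unfolding k0_def by (rule Least_le[of P, OF PN])
  have X: "4^k0 * l^2 \<le> l^2 + 16 * t^2"
  proof (cases k0)
    case 0 then show ?thesis by simp
  next
    case (Suc j)
    then have "j < k0" by simp
    then have "\<not> P j" unfolding k0_def by (rule not_less_Least)
    then have lt: "2^j * l < 2 * \<bar>t\<bar>" unfolding P_def by simp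
    have "(2^j * l)^2 \<le> (2 * \<bar>t\<bar>)^2" using lt l0 by (intro power_mono) auto
    moreover have "(2^j*l)^2 = 4^j * l^2"
    proof -
      have "(2::real)^j * 2^j = 4^j" by (metis power_mult_distrib num_double numeral_times_numeral)
      then show ?thesis by (simp add: power2_eq_square algebra_simps)
    qed
    moreover have "(2 * \<bar>t\<bar>)^2 = 4 * t^2" by (simp add: power2_eq_square)
    ultimately have "4^j * l^2 \<le> 4 * t^2" by metis
    then have "4*(4^j * l^2) \<le> 4*(4 * t^2)" by (rule mult_left_mono) simp
    moreover have "0 \<le> l^2" by simp
    moreover have "(4::real)^k0 * l^2 = 4*(4^j*l^2)" using Suc by simp
    ultimately show ?thesis by linarith
  qed
  have key: "4^k0 * l^2 \<le> 16 * D"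
  proof (cases "l \<le> 3/4")
    case True
    then have "1 * t^2 \<le> (4 * (1-l)) * t^2" by (intro mult_right_mono) auto
    then have "t^2 \<le> 4 * (1-l) * t^2" by simp
    moreover have "0 \<le> l^2" by simp
    ultimately show ?thesis using X Dlb by linarith
  next
    case False
    have "(3/4)^2 \<le> l^2" using False by (intro power_mono) auto
    then have "9/16 \<le> l^2" by (simp add: power2_eq_square)
    have "\<bar>t\<bar>^2 \<le> (1/2)^2" using t by (intro power_mono) auto
    then have "t^2 \<le> 1/4" by (simp add: power2_eq_square)
    note \<open>9/16 \<le> l^2\<close> this
    moreover have "0 \<le> 4 * (1-l) * t^2" using l1 by simp
    ultimately show ?thesis using X Dlb by linarith
  qed
  have zin: "zeta \<in> circ_arc xi (2^k0*l)" using Pk0 unfolding P_def circ_arc_def zeta by auto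
  have A: "num / D \<le> (32/l) * (1/4)^k0"
  proof -
    have "num * l * 4^k0 \<le> 2 * l * l * 4^k0" using num2 l0 by (intro mult_right_mono) auto
    also have "\<dots> \<le> 32 * D" using key by (simp add: power2_eq_square algebra_simps)
    finally have "num * l * 4^k0 \<le> 32 * D" .
    then show ?thesis using Dpos l0 by (simp add: divide_simps power_one_over)
  qed
  have B: "(1/4::real)^k0 = (1/4)^k0 * indicator (circ_arc xi (2^k0*l)) zeta" using zin by simp
  have C: "(1/4)^k0 * indicator (circ_arc xi (2^k0*l)) zeta \<le> (\<Sum>k\<le>N. (1/4::real)^k * indicator (circ_arc xi (2^k*l)) zeta)"
    by (rule member_le_sum[where f = "\<lambda>k. (1/4)^k * indicator (circ_arc xi (2^k*l)) zeta"]) (use k0N in auto)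
  have "(32/l) * (1/4)^k0 \<le> (32/l) * (\<Sum>k\<le>N. (1/4::real)^k * indicator (circ_arc xi (2^k*l)) zeta)"
    using B C l0 by (intro mult_left_mono) auto
  with A have "num / D \<le> (32/l) * (\<Sum>k\<le>N. (1/4)^k * indicator (circ_arc xi (2^k*l)) zeta)"
    by linarith
  then show ?thesis unfolding num_def D_def .
qed

theorem mainTheorem15:
  fixes \<epsilon> :: real
  assumes "0 < \<epsilon>" "\<epsilon> < 1"
  shows "\<exists>c>0. \<forall>\<sigma> :: complex measure.
     sets \<sigma> = sets (restrict_space borel (sphere 0 1)) \<longrightarrow>
     finite_measure \<sigma> \<longrightarrow>
     (\<forall>xi \<in> sphere 0 1. \<forall>l \<in> {0<..1}.
        measure \<sigma> (circ_arc xi (2 * l)) \<le> 2 * (1 + \<epsilon>) * measure \<sigma> (circ_arc xi l)) \<longrightarrow>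
     (\<forall>xi \<in> sphere 0 1. \<forall>l \<in> {0<..1}.
        measure \<sigma> (circ_arc xi l) / l \<ge> c * poisson_int \<sigma> (complex_of_real (1 - l) * xi))"
proof (intro exI[of _ "(1-\<epsilon>)/64"] conjI allI impI ballI)
  show "0 < (1-\<epsilon>)/64" using assms by simp
  fix \<sigma> :: "complex measure" and xi l
  assume sets: "sets \<sigma> = sets (restrict_space borel (sphere 0 1))"
    and fin: "finite_measure \<sigma>"
    and dbl0: "\<forall>xi \<in> sphere 0 1. \<forall>l \<in> {0<..1}.
        measure \<sigma> (circ_arc xi (2 * l)) \<le> 2 * (1 + \<epsilon>) * measure \<sigma> (circ_arc xi l)"
    and xiS: "xi \<in> sphere (0::complex) 1" and lI: "l \<in> {0<..(1::real)}"
  have xi: "cmod xi = 1" using xiS by simp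
  have l0: "0 < l" and l1: "l \<le> 1" using lI by auto
  have space: "space \<sigma> = sphere 0 1"
    using sets_eq_imp_space_eq[OF sets] by (simp add: space_restrict_space)
  have Ssets: "sphere (0::complex) 1 \<inter> space borel \<in> sets borel" by (simp add: borel_closed)
  have arcsets: "circ_arc xi L \<in> sets \<sigma>" for L
    unfolding sets sets_restrict_space_iff[OF Ssets]
    using arc_sub[OF xi] arc_closed borel_closed by blast
  define m where "m = (\<lambda>L. measure \<sigma> (circ_arc xi L))"
  have dbl: "m (2*L) \<le> 2 * (1+\<epsilon>) * m L" if "0 < L" for L
  proof (cases "L \<le> 1")
    case True then show ?thesis using dbl0 xiS that unfolding m_def by auto
  next
    case False
    then have "circ_arc xi (2*L) = circ_arc xi L" using arc_full[OF xi] by simp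
    moreover have "0 \<le> m L" unfolding m_def by simp
    moreover have "1 * m L \<le> (2*(1+\<epsilon>)) * m L" using \<open>0 \<le> m L\<close> assms by (intro mult_right_mono) auto
    ultimately show ?thesis unfolding m_def by simp
  qed
  have iter: "m (2^k * l) \<le> (2*(1+\<epsilon>))^k * m l" for k
  proof (induction k)
    case 0 then show ?case by simp
  next
    case (Suc k)
    have "m (2^Suc k * l) = m (2 * (2^k * l))" by (simp add: mult.assoc)
    also have "\<dots> \<le> 2 * (1+\<epsilon>) * m (2^k * l)" using l0 by (intro dbl) simp
    also have "\<dots> \<le> 2 * (1+\<epsilon>) * ((2*(1+\<epsilon>))^k * m l)" using Suc assms by (intro mult_left_mono) auto
    finally show ?case by simp
  qed
  obtain N where N: "1/l < 2^N" using real_arch_pow[of 2 "1/l"] by auto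
  then have N': "1 \<le> 2^N * l" using l0 by (simp add: field_simps)
  define g where "g = (\<lambda>zeta. (32/l) * (\<Sum>k\<le>N. (1/4::real)^k * indicator (circ_arc xi (2^k*l)) zeta))"
  have fin_em: "emeasure \<sigma> A < \<infinity>" for A
    using finite_measure.emeasure_finite[OF fin] by (simp add: less_top)
  have int_ind: "integrable \<sigma> (\<lambda>zeta. (1/4::real)^k * indicator (circ_arc xi (2^k*l)) zeta)" for k
    using arcsets fin_em by (intro integrable_mult_right integrable_real_indicator) auto
  have intg: "integrable \<sigma> g"
  proof -
    have "integrable \<sigma> (\<lambda>zeta. \<Sum>k\<le>N. (1/4::real)^k * indicator (circ_arc xi (2^k*l)) zeta)"
      by (rule Bochner_Integration.integrable_sum[where f="\<lambda>k zeta. (1/4::real)^k * indicator (circ_arc xi (2^k*l)) zeta"]) (rule int_ind)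
    then show ?thesis unfolding g_def by (intro integrable_mult_right)
  qed
  have I1: "poisson_int \<sigma> (complex_of_real (1 - l) * xi) \<le> integral\<^sup>L \<sigma> g"
    unfolding poisson_int_def
  proof (rule integral_mono'[OF intg])
    fix zeta assume "zeta \<in> space \<sigma>"
    then have zt: "cmod zeta = 1" using space by simp
    show "(1 - (cmod (complex_of_real (1 - l) * xi))\<^sup>2) / (cmod (zeta - complex_of_real (1 - l) * xi))\<^sup>2 \<le> g zeta"
      unfolding g_def by (rule pointwise[OF xi zt l0 l1 N'])
    show "0 \<le> g zeta" unfolding g_def using l0 by (intro mult_nonneg_nonneg sum_nonneg) auto
  qed
  have I2: "integral\<^sup>L \<sigma> g = (32/l) * (\<Sum>k\<le>N. (1/4::real)^k * m (2^k*l))"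
  proof -
    have "integral\<^sup>L \<sigma> g = (32/l) * integral\<^sup>L \<sigma> (\<lambda>zeta. \<Sum>k\<le>N. (1/4::real)^k * indicator (circ_arc xi (2^k*l)) zeta)"
      unfolding g_def by simp
    also have "integral\<^sup>L \<sigma> (\<lambda>zeta. \<Sum>k\<le>N. (1/4::real)^k * indicator (circ_arc xi (2^k*l)) zeta)
       = (\<Sum>k\<le>N. integral\<^sup>L \<sigma> (\<lambda>zeta. (1/4::real)^k * indicator (circ_arc xi (2^k*l)) zeta))"
      by (rule Bochner_Integration.integral_sum[where f="\<lambda>k zeta. (1/4::real)^k * indicator (circ_arc xi (2^k*l)) zeta"]) (rule int_ind)
    also have "\<dots> = (\<Sum>k\<le>N. (1/4::real)^k * m (2^k*l))"
    proof (intro sum.cong refl)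
      fix k
      have "circ_arc xi (2^k*l) \<inter> space \<sigma> = circ_arc xi (2^k*l)" using arc_sub[OF xi] space by auto
      then show "integral\<^sup>L \<sigma> (\<lambda>zeta. (1/4::real)^k * indicator (circ_arc xi (2^k*l)) zeta) = (1/4::real)^k * m (2^k*l)"
        unfolding m_def by simp
    qed
    finally show ?thesis .
  qed
  have "(\<Sum>k\<le>N. (1/4::real)^k * m (2^k*l)) \<le> (\<Sum>k\<le>N. ((1+\<epsilon>)/2)^k * m l)"
  proof (intro sum_mono)
    fix k
    have "(1/4::real)^k * m (2^k*l) \<le> (1/4)^k * ((2*(1+\<epsilon>))^k * m l)" using iter by (intro mult_left_mono) auto
    also have "\<dots> = ((1/4) * (2*(1+\<epsilon>)))^k * m l" by (simp only: power_mult_distrib mult.assoc)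
    also have "(1/4) * (2*(1+\<epsilon>)) = (1+\<epsilon>)/2" by simp
    finally show "(1/4::real)^k * m (2^k*l) \<le> ((1+\<epsilon>)/2)^k * m l" .
  qed
  also have "(\<Sum>k\<le>N. ((1+\<epsilon>)/2)^k * m l) = m l * (\<Sum>k<Suc N. ((1+\<epsilon>)/2)^k)"
    by (simp add: sum_distrib_left lessThan_Suc_atMost mult.commute)
  also have "(\<Sum>k<Suc N. ((1+\<epsilon>)/2)^k) = (1 - ((1+\<epsilon>)/2)^Suc N) / (1 - (1+\<epsilon>)/2)"
    using assms by (subst sum_gp_strict) auto
  also have "m l * \<dots> \<le> m l * (2 / (1-\<epsilon>))"
  proof -
    have "0 \<le> ((1+\<epsilon>)/2)^Suc N" using assms by simp
    moreover have "1 - (1+\<epsilon>)/2 = (1-\<epsilon>)/2" by (simp add: field_simps)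
    ultimately have "(1 - ((1+\<epsilon>)/2)^Suc N) / (1 - (1+\<epsilon>)/2) \<le> 2 / (1-\<epsilon>)" using assms by (simp add: divide_simps)
    moreover have "0 \<le> m l" unfolding m_def by simp
    ultimately show ?thesis by (rule mult_left_mono)
  qed
  finally have S: "(\<Sum>k\<le>N. (1/4::real)^k * m (2^k*l)) \<le> m l * (2 / (1-\<epsilon>))" .
  have u: "poisson_int \<sigma> (complex_of_real (1 - l) * xi) \<le> (32/l) * (m l * (2 / (1-\<epsilon>)))"
    using I1 I2 mult_left_mono[OF S, of "32/l"] l0 by simp
  show "(1-\<epsilon>)/64 * poisson_int \<sigma> (complex_of_real (1 - l) * xi) \<le> measure \<sigma> (circ_arc xi l) / l"
  proof -
    have "(1-\<epsilon>)/64 * poisson_int \<sigma> (complex_of_real (1 - l) * xi) \<le> (1-\<epsilon>)/64 * ((32/l) * (m l * (2 / (1-\<epsilon>))))"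
      using u assms by (intro mult_left_mono) auto
    also have "\<dots> = m l / l" using assms l0 by (simp add: field_simps)
    finally show ?thesis unfolding m_def .
  qed
qed

end
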